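(* Let $\Sigma$ be a real symmetric positive definite $n\times n$ matrix, and let \[{\operatorname{mr}}_+(\Sigma)=\min\{\operatorname{rank}(\hat\Sigma)\mid \Sigma=\tilde\Sigma+\hat\Sigma,\ \tilde\Sigma\ge 0,\ \hat\Sigma\ge 0,\ \tilde\Sigma\text{ diagonal}\}.\] Then \[{\operatorname{mr}}_+(\Sigma)\ge\min\{\operatorname{trace}(\Sigma^{-1}(\Sigma-D))\mid D\text{ real diagonal},\ \Sigma\ge D\ge 0\}.\]
   Context: $M\ge 0$ means $M$ is positive semidefinite and $A\ge B$ means $A-B\ge0$; all matrices are real symmetric $n\times n$. *)

theory Defs
  imports "HOL-Analysis.Analysis"
begin

definition sym_mat :: "real^'n^'n \<Rightarrow> bool" where
  "sym_mat A \<longleftrightarrow> transpose A = A"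

definition psd :: "real^'n^'n \<Rightarrow> bool" where
  "psd A \<longleftrightarrow> sym_mat A \<and> (\<forall>x. 0 \<le> x \<bullet> (A *v x))"

definition pd :: "real^'n^'n \<Rightarrow> bool" where
  "pd A \<longleftrightarrow> sym_mat A \<and> (\<forall>x. x \<noteq> 0 \<longrightarrow> 0 < x \<bullet> (A *v x))"

definition diag_mat :: "real^'n^'n \<Rightarrow> bool" where
  "diag_mat A \<longleftrightarrow> (\<forall>i j. i \<noteq> j \<longrightarrow> A $ i $ j = 0)"

definition mr_plus :: "real^'n^'n \<Rightarrow> nat" where
  "mr_plus S = Min {rank H | H T. S = T + H \<and> psd T \<and> psd H \<and> diag_mat T}"

end

theory Submission
  imports Defs
begin

lemma sym_dot:
  assumes "sym_mat H"
  shows "x \<bullet> (H *v y) = y \<bullet> (H *v (x::real^'n))"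
proof -
  have "x \<bullet> (H *v y) = (x v* H) \<bullet> y" by (simp add: dot_lmul_matrix)
  also have "x v* H = transpose H *v x" by simp
  also have "\<dots> = H *v x" using assms by (simp add: sym_mat_def)
  finally show ?thesis by (simp add: inner_commute)
qed

lemma pd_inv:
  assumes "pd (S::real^'n^'n)"
  shows "S ** matrix_inv S = mat 1"
proof -
  have "\<forall>x. S *v x = 0 \<longrightarrow> x = 0"
    using assms unfolding pd_def by (metis inner_zero_right less_irrefl)
  then obtain B where "B ** S = mat 1" using matrix_left_invertible_ker by blast
  then have "S ** B = mat 1 \<and> B ** S = mat 1" using matrix_left_right_inverse by blast
  then have "\<exists>A'. S ** A' = mat 1 \<and> A' ** S = mat 1" by blast
  from someI_ex[OF this] show ?thesis unfolding matrix_inv_def by blast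
qed

lemma psd_quad:
  assumes "psd H"
  shows "(x + t *\<^sub>R v) \<bullet> (H *v (x + t *\<^sub>R v)) =
     x \<bullet> (H *v x) + 2 * t * (x \<bullet> (H *v v)) + t^2 * (v \<bullet> (H *v (v::real^'n)))"
proof -
  have s: "v \<bullet> (H *v x) = x \<bullet> (H *v v)" using assms sym_dot unfolding psd_def by metis
  have "(x + t *\<^sub>R v) \<bullet> (H *v (x + t *\<^sub>R v)) =
     x \<bullet> (H *v x) + t * (x \<bullet> (H *v v)) + t * (v \<bullet> (H *v x)) + t * t * (v \<bullet> (H *v v))"
    by (simp add: matrix_vector_right_distrib matrix_vector_mult_scaleR inner_add_left
        inner_add_right algebra_simps)
  then show ?thesis using s by (simp add: power2_eq_square algebra_simps)
qed

lemma psd_cs: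
  assumes "psd H" "0 < v \<bullet> (H *v v)"
  shows "(x \<bullet> (H *v v))^2 \<le> (x \<bullet> (H *v x)) * (v \<bullet> (H *v (v::real^'n)))"
proof -
  define b where "b = v \<bullet> (H *v v)"
  define c where "c = x \<bullet> (H *v v)"
  define t where "t = - c / b"
  have "0 \<le> (x + t *\<^sub>R v) \<bullet> (H *v (x + t *\<^sub>R v))" using assms(1) psd_def by blast
  also have "\<dots> = x \<bullet> (H *v x) + 2 * t * c + t^2 * b" using psd_quad[OF assms(1)] b_def c_def by simp
  also have "\<dots> = x \<bullet> (H *v x) - c^2 / b" using assms(2) unfolding t_def b_def[symmetric]
    by (simp add: field_simps power2_eq_square)
  finally have "c^2 / b \<le> x \<bullet> (H *v x)" by simp
  then show ?thesis using assms(2) unfolding b_def[symmetric] c_def[symmetric]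
    by (simp add: field_simps)
qed

lemma psd_zero:
  assumes "psd H" "v \<bullet> (H *v v) = 0"
  shows "H *v (v::real^'n) = 0"
proof -
  define x where "x = H *v v"
  define c where "c = x \<bullet> (H *v v)"
  define q where "q = x \<bullet> (H *v x)"
  have q0: "0 \<le> q" using assms(1) psd_def q_def by blast
  define t where "t = - c / (q + 1)"
  have "0 \<le> (v + t *\<^sub>R x) \<bullet> (H *v (v + t *\<^sub>R x))" using assms(1) psd_def by blast
  also have "\<dots> = 2 * t * c + t^2 * q"
    using psd_quad[OF assms(1), of v t x] assms(2) c_def q_def sym_dot assms(1) psd_def
    by (metis add_0)
  finally have h0: "0 \<le> 2 * t * c + t^2 * q" .
  have ne: "q + 1 \<noteq> 0" using q0 by simp
  have tq: "t * (q+1) = - c" using ne unfolding t_def by simp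
  have "(q+1)^2 * (2 * t * c + t^2 * q) = 2*c*(t*(q+1))*(q+1) + (t*(q+1))^2*q"
    by (simp add: power2_eq_square algebra_simps)
  also have "\<dots> = c^2 * (- q - 2)" unfolding tq by (simp add: power2_eq_square algebra_simps)
  finally have "(q+1)^2 * (2 * t * c + t^2 * q) = c^2 * (- q - 2)" .
  moreover have "0 \<le> (q+1)^2 * (2 * t * c + t^2 * q)" using h0 by simp
  ultimately have "c^2 * (- q - 2) \<ge> 0" by simp
  then have "c^2 * (q + 2) \<le> 0" by (simp add: algebra_simps)
  moreover have "q + 2 > 0" using q0 by simp
  ultimately have "c^2 \<le> 0" by (simp add: mult_le_0_iff)
  then have "c = 0" by simp
  then show ?thesis unfolding c_def x_def by simp
qed


lemma sym_entries:
  assumes "sym_mat (H::real^'n^'n)"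
  shows "H$i$j = H$j$i"
proof -
  have "H$i$j = (transpose H)$i$j" using assms by (simp add: sym_mat_def)
  also have "\<dots> = H$j$i" by (simp add: transpose_def)
  finally show ?thesis .
qed

lemma sym_by_entries:
  assumes "\<And>i j. (H::real^'n^'n)$i$j = H$j$i"
  shows "sym_mat H"
  unfolding sym_mat_def transpose_def using assms by (simp add: vec_eq_iff)

lemma subspace_range_mat: "subspace (range (\<lambda>x. (A::real^'n^'m) *v x))"
  unfolding subspace_def
  by (metis (no_types, lifting) matrix_vector_mult_0_right matrix_vector_right_distrib
      matrix_vector_mult_scaleR rangeE rangeI)

lemma outer_mv:
  "(\<chi> i j. w$i * w$j / b) *v y = ((w \<bullet> y) / b) *\<^sub>R (w::real^'n)"
  by (simp add: vec_eq_iff matrix_vector_mult_def inner_vec_def sum_divide_distrib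
      sum_distrib_left algebra_simps)

lemma outer_trace:
  "trace (A ** (\<chi> i j. w$i * w$j / b)) = (w \<bullet> (A *v w)) / (b::real)"
  by (simp add: trace_def matrix_matrix_mult_def inner_vec_def matrix_vector_mult_def
      sum_divide_distrib sum_distrib_left algebra_simps)


lemma key:
  fixes S H :: "real^'n^'n"
  assumes S: "pd S" and "psd H" "psd (S - H)"
  shows "0 \<le> trace (matrix_inv S ** H) \<and> trace (matrix_inv S ** H) \<le> real (rank H)"
  using assms(2,3)
proof (induction "rank H" arbitrary: H rule: less_induct)
  case less
  define Si where "Si = matrix_inv S"
  have Hsym: "sym_mat H" using less.prems(1) psd_def by blast
  have SHsym: "sym_mat (S - H)" using less.prems(2) psd_def by blast
  show ?case
  proof (cases "H = 0")
    case True
    then show ?thesis by (simp add: trace_def matrix_matrix_mult_def)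
  next
    case False
    then obtain v where hv: "H *v v \<noteq> 0" using matrix_eq[of H 0] by auto
    define w where "w = H *v v"
    define b where "b = v \<bullet> w"
    have "b \<ge> 0" using less.prems(1) psd_def b_def w_def by blast
    moreover have "b \<noteq> 0" using psd_zero[OF less.prems(1), of v] hv unfolding b_def w_def by blast
    ultimately have bpos: "b > 0" by simp
    define Ow :: "real^'n^'n" where "Ow = (\<chi> i j. w$i * w$j / b)"
    define H' where "H' = H - Ow"
    have Omv: "\<And>y. Ow *v y = ((w \<bullet> y) / b) *\<^sub>R w" unfolding Ow_def by (rule outer_mv)
    have Osym: "\<And>i j. Ow$i$j = Ow$j$i" unfolding Ow_def by simp
    have H'v: "\<And>y. H' *v y = H *v y - ((w \<bullet> y) / b) *\<^sub>R w"
      unfolding H'_def by (simp add: matrix_vector_mult_diff_rdistrib Omv)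
    have wx: "\<And>x. w \<bullet> x = x \<bullet> (H *v v)" unfolding w_def by (simp add: inner_commute)
    have H'sym: "sym_mat H'" unfolding H'_def
      by (rule sym_by_entries) (simp add: sym_entries[OF Hsym] Osym)
    have "psd H'" unfolding psd_def
    proof (intro conjI allI H'sym)
      fix x
      have cs: "(x \<bullet> (H *v v))^2 \<le> (x \<bullet> (H *v x)) * b"
        using psd_cs[OF less.prems(1)] bpos unfolding b_def w_def by blast
      have "x \<bullet> (H' *v x) = x \<bullet> (H *v x) - (w \<bullet> x)^2 / b"
        by (simp add: H'v inner_diff_right power2_eq_square inner_commute)
      also have "\<dots> \<ge> 0" using cs bpos by (simp add: wx field_simps)
      finally show "0 \<le> x \<bullet> (H' *v x)" .
    qed
    have "psd (S - H')" unfolding psd_def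
    proof (intro conjI allI)
      show "sym_mat (S - H')" unfolding H'_def
        by (rule sym_by_entries) (simp add: sym_entries[OF SHsym, simplified] Osym)
    next
      fix x
      have "x \<bullet> ((S - H') *v x) = x \<bullet> ((S - H) *v x) + (w \<bullet> x)^2 / b"
        by (simp add: matrix_vector_mult_diff_rdistrib H'v inner_diff_right power2_eq_square inner_commute)
      also have "\<dots> \<ge> 0" using less.prems(2) bpos unfolding psd_def by simp
      finally show "0 \<le> x \<bullet> ((S - H') *v x)" .
    qed
    have rk: "rank H' < rank H"
    proof -
      have sub: "range (\<lambda>x. H' *v x) \<subseteq> range (\<lambda>x. H *v x)"
      proof
        fix z assume "z \<in> range (\<lambda>x. H' *v x)"
        then obtain y where "z = H' *v y" by blast
        then have "z = H *v (y - ((w \<bullet> y) / b) *\<^sub>R v)"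
          by (simp add: H'v matrix_vector_mult_diff_distrib matrix_vector_mult_scaleR w_def)
        then show "z \<in> range (\<lambda>x. H *v x)" by blast
      qed
      have "w \<notin> range (\<lambda>x. H' *v x)"
      proof
        assume "w \<in> range (\<lambda>x. H' *v x)"
        then obtain y where y: "w = H' *v y" by blast
        have H'v0: "H' *v v = 0" using bpos by (simp add: H'v b_def inner_commute w_def)
        have "b = v \<bullet> (H' *v y)" using y b_def by simp
        also have "\<dots> = y \<bullet> (H' *v v)" by (rule sym_dot[OF H'sym])
        finally show False using H'v0 bpos by simp
      qed
      moreover have "w \<in> range (\<lambda>x. H *v x)" unfolding w_def by blast
      ultimately have "span (range (\<lambda>x. H' *v x)) \<subset> span (range (\<lambda>x. H *v x))"
      proof -
        have e1: "span (range (\<lambda>x. H *v x)) = range (\<lambda>x. H *v x)"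
          using subspace_range_mat[of H] by (metis span_eq_iff)
        have e2: "span (range (\<lambda>x. H' *v x)) = range (\<lambda>x. H' *v x)"
          using subspace_range_mat[of H'] by (metis span_eq_iff)
        show ?thesis unfolding e1 e2 using sub \<open>w \<in> range (\<lambda>x. H *v x)\<close> \<open>w \<notin> range (\<lambda>x. H' *v x)\<close> by blast
      qed
      then show ?thesis unfolding rank_dim_range by (rule dim_psubset)
    qed
    from less.hyps[OF rk \<open>psd H'\<close> \<open>psd (S - H')\<close>]
    have IH: "0 \<le> trace (Si ** H')" "trace (Si ** H') \<le> real (rank H')" unfolding Si_def by auto
    define a where "a = w \<bullet> (Si *v w)"
    have tr: "trace (Si ** H) = trace (Si ** H') + a / b"
    proof -
      have "H = H' + Ow" unfolding H'_def by simp
      then have "trace (Si ** H) = trace (Si ** H') + trace (Si ** Ow)"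
        by (simp add: matrix_add_ldistrib trace_add)
      then show ?thesis unfolding Ow_def outer_trace a_def .
    qed
    define y where "y = Si *v w"
    have Sy: "S *v y = w" unfolding y_def Si_def
      by (simp add: matrix_vector_mul_assoc pd_inv[OF S])
    have a_eq: "a = y \<bullet> (S *v y)" unfolding a_def y_def[symmetric] Sy by (simp add: inner_commute)
    have a0: "0 \<le> a" using a_eq S unfolding pd_def by (metis inner_zero_left order_refl less_imp_le)
    have yHv: "y \<bullet> (H *v v) = a" using a_eq Sy w_def by (simp add: inner_commute)
    have yHy: "y \<bullet> (H *v y) \<le> a"
    proof -
      have "0 \<le> y \<bullet> ((S - H) *v y)" using less.prems(2) psd_def by blast
      then show ?thesis using a_eq by (simp add: matrix_vector_mult_diff_rdistrib inner_diff_right)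
    qed
    have "a^2 \<le> (y \<bullet> (H *v y)) * b"
      using psd_cs[OF less.prems(1), of v y] bpos yHv unfolding b_def w_def by simp
    also have "\<dots> \<le> a * b" using yHy bpos by (simp add: mult_right_mono)
    finally have "a^2 \<le> a * b" .
    then have ab: "a \<le> b" using a0 bpos
      by (smt (verit) mult_le_cancel_left power2_eq_square)
    have "a / b \<le> 1" using ab bpos by simp
    moreover have "0 \<le> a / b" using a0 bpos by simp
    ultimately show ?thesis using IH rk unfolding Si_def[symmetric] tr by linarith
  qed
qed


theorem proposition9:
  fixes S :: "real^'n^'n"
  assumes "pd S"
  shows "real (mr_plus S) \<ge>
    Inf {trace (matrix_inv S ** (S - D)) | D. diag_mat D \<and> psd (S - D) \<and> psd D}"
proof -
  define R where "R = {rank H | H T. S = T + H \<and> psd T \<and> psd H \<and> diag_mat (T::real^'n^'n)}"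
  define X where "X = {trace (matrix_inv S ** (S - D)) | D. diag_mat D \<and> psd (S - D) \<and> psd D}"
  have fin: "finite R"
    by (rule finite_subset[of _ "{..CARD('n)}"]) (use rank_bound in \<open>auto simp: R_def\<close>)
  have psd0: "psd (0::real^'n^'n)" by (simp add: psd_def sym_mat_def transpose_def vec_eq_iff)
  have "psd S" unfolding psd_def
  proof (intro conjI allI)
    show "sym_mat S" using assms pd_def by blast
  next
    fix x :: "real^'n"
    show "0 \<le> x \<bullet> (S *v x)"
      using assms unfolding pd_def by (cases "x = 0") (auto intro: less_imp_le)
  qed
  then have "rank S \<in> R"
  proof -
    have "S = 0 + S \<and> psd (0::real^'n^'n) \<and> psd S \<and> diag_mat (0::real^'n^'n)"
      using psd0 \<open>psd S\<close> by (simp add: diag_mat_def)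
    then show ?thesis unfolding R_def by blast
  qed
  then have ne: "R \<noteq> {}" by blast
  have "mr_plus S \<in> R" unfolding mr_plus_def R_def[symmetric] using Min_in[OF fin ne] .
  then obtain H T where HT: "mr_plus S = rank H" "S = T + H" "psd T" "psd H" "diag_mat T"
    unfolding R_def by blast
  have SH: "S - T = H" using HT(2) by simp
  have "trace (matrix_inv S ** H) = trace (matrix_inv S ** (S - T)) \<and> diag_mat T \<and> psd (S - T) \<and> psd T"
    using HT SH by simp
  then have mem: "trace (matrix_inv S ** H) \<in> X" unfolding X_def by blast
  have bdd: "bdd_below X"
  proof (rule bdd_belowI)
    fix x assume "x \<in> X"
    then obtain D where D: "x = trace (matrix_inv S ** (S - D))" "psd (S - D)" "psd D"
      unfolding X_def by blast
    have "psd (S - (S - D))" using D(3) by simp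
    then show "0 \<le> x" using key[OF assms D(2)] D(1) by blast
  qed
  have "Inf X \<le> trace (matrix_inv S ** H)" by (rule cInf_lower[OF mem bdd])
  also have "\<dots> \<le> real (rank H)"
  proof -
    have "S - H = T" using HT(2) by simp
    then have "psd (S - H)" using HT(3) by simp
    then show ?thesis using key[OF assms HT(4)] by blast
  qed
  finally show ?thesis unfolding X_def HT(1) .
qed

end
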